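(* Let $f,g\in H^2_\tau(\mathcal S)$ be such that $|g(x)|=|f(x)|$ for all $x\in\mathbb R$ and $$|g(z)|=|f(z)|\qquad\text{for all } z \text{ in the open segment } (a-e^{i\theta},\,a+e^{i\theta})=\{a+te^{i\theta}: t\in(-1,1)\},$$ where $a\in\mathbb R$ and $\theta\notin\pi\mathbb Q$. Then $g=cf$ for some constant $c\in\mathbb C$ with $|c|=1$.
   Context: $\mathcal S=\{z\in\mathbb C:|\mathrm{Im}\,z|<1\}$ is the strip, and $H^2_\tau(\mathcal S)$ is the space of holomorphic functions $f$ on $\mathcal S$ with $\sup_{|y|<1}\int_{\mathbb R}|f(t+iy)|^2\,\mathrm dt<\infty$. *)

theory Defs
  imports "HOL-Analysis.Analysis"
begin

definition strip :: "complex set" where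
  "strip = {z. \<bar>Im z\<bar> < 1}"

definition H2_strip :: "(complex \<Rightarrow> complex) set" where
  "H2_strip = {f. f holomorphic_on strip \<and>
     (\<exists>B::real. \<forall>y::real. \<bar>y\<bar> < 1 \<longrightarrow>
        integrable lborel (\<lambda>t::real. (cmod (f (Complex t y)))\<^sup>2) \<and>
        (\<integral>t. (cmod (f (Complex t y)))\<^sup>2 \<partial>lborel) \<le> B)}"

end

theory Submission
  imports Defs "HOL-Complex_Analysis.Complex_Analysis"
begin

lemma lim0_eq:
  fixes p q :: "complex \<Rightarrow> complex"
  assumes "r > 0" "continuous_on (ball 0 r) p" "continuous_on (ball 0 r) q"
    and "\<And>u. u \<in> ball 0 r \<Longrightarrow> u \<noteq> 0 \<Longrightarrow> p u = q u"
  shows "p 0 = q 0"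
proof -
  have "(p \<longlongrightarrow> p 0) (at 0)" "(q \<longlongrightarrow> q 0) (at 0)"
    using assms by (simp_all add: continuous_on_interior isContD)
  moreover have "eventually (\<lambda>u. p u = q u) (at 0)"
    unfolding eventually_at using assms(1,4) by (auto simp: dist_norm intro!: exI[of _ r])
  ultimately have "(q \<longlongrightarrow> p 0) (at 0)" using tendsto_cong by (metis (mono_tags, lifting))
  then show ?thesis using \<open>(q \<longlongrightarrow> q 0) (at 0)\<close> tendsto_unique by (metis at_neq_bot)
qed

lemma factor0:
  fixes f :: "complex \<Rightarrow> complex"
  assumes "f holomorphic_on ball 0 1" "w \<in> ball 0 1" "f w \<noteq> 0"
  obtains r h n where "0 < r" "ball 0 r \<subseteq> ball (0::complex) 1" "h holomorphic_on ball 0 r"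
     "\<And>u. u \<in> ball 0 r \<Longrightarrow> f u = u ^ n * h u"  "h 0 \<noteq> 0"
proof (cases "f 0 = 0")
  case True
  have nc: "\<not> f constant_on ball 0 1"
    using assms True unfolding constant_on_def by (metis centre_in_ball zero_less_one)
  obtain h r n where H: "0 < n"  "0 < r"  "ball 0 r \<subseteq> ball (0::complex) 1"
            "h holomorphic_on ball 0 r"
            "\<And>w. w \<in> ball 0 r \<Longrightarrow> f w = (w - 0)^n * h w"
            "\<And>w. w \<in> ball 0 r \<Longrightarrow> h w \<noteq> 0"
    apply (rule holomorphic_factor_zero_nonconstant[OF assms(1) open_ball connected_ball _ True nc])
     apply simp
    apply blast
    done
  show ?thesis
  proof (rule that[of r h n])
    show "h 0 \<noteq> 0" using H(2,6) by simp
    show "f u = u ^ n * h u" if "u \<in> ball 0 r" for u using H(5)[OF that] by simp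
  qed (insert H(2,3,4), assumption+)
next
  case False
  show ?thesis
    by (rule that[of 1 f 0]) (use False assms(1) in auto)
qed

lemma exps_eq:
  fixes f g h1 h2 :: "complex \<Rightarrow> complex" and \<mu> :: complex
  assumes "0 < r" "h1 holomorphic_on ball 0 r" "h2 holomorphic_on ball 0 r"
    and "\<And>u. u \<in> ball 0 r \<Longrightarrow> f u = u ^ m * h1 u"
    and "\<And>u. u \<in> ball 0 r \<Longrightarrow> g u = u ^ k * h2 u"
    and "h1 0 \<noteq> 0" "h2 0 \<noteq> 0"
    and mu: "cmod \<mu> = 1" "\<And>n. n > 0 \<Longrightarrow> \<mu> ^ n \<noteq> 1"
    and id: "\<And>u. u \<in> ball 0 r \<Longrightarrow> g (\<mu> * u) * f u = f (\<mu> * u) * g u"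
  shows "m = k"
proof -
  have mb: "\<mu> * u \<in> ball 0 r" if "u \<in> ball 0 r" for u
    using that mu(1) by (simp add: norm_mult)
  have eq: "\<mu> ^ k * h2 (\<mu> * u) * h1 u = \<mu> ^ m * h1 (\<mu> * u) * h2 u"
    if u: "u \<in> ball 0 r" "u \<noteq> 0" for u
  proof -
    have e1: "g (\<mu> * u) = (\<mu> * u) ^ k * h2 (\<mu> * u)" "f (\<mu> * u) = (\<mu> * u) ^ m * h1 (\<mu> * u)"
      "f u = u ^ m * h1 u" "g u = u ^ k * h2 u"
      using assms(4,5) mb u by blast+
    have "u ^ (k + m) * (\<mu> ^ k * h2 (\<mu> * u) * h1 u) = g (\<mu> * u) * f u"
      unfolding e1 by (simp add: power_mult_distrib power_add mult_ac)
    also have "\<dots> = f (\<mu> * u) * g u" using id u by blast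
    also have "\<dots> = u ^ (k + m) * (\<mu> ^ m * h1 (\<mu> * u) * h2 u)"
      unfolding e1 by (simp add: power_mult_distrib power_add mult_ac)
    finally show ?thesis using u(2) by (simp only: mult_left_cancel power_not_zero[OF u(2)] not_False_eq_True)
  qed
  have c1: "continuous_on (ball 0 r) h1" "continuous_on (ball 0 r) h2"
    using assms(2,3) holomorphic_on_imp_continuous_on by auto
  have c2: "continuous_on (ball 0 r) (\<lambda>u. h1 (\<mu> * u))" "continuous_on (ball 0 r) (\<lambda>u. h2 (\<mu> * u))"
    using mb by (auto intro!: continuous_on_compose2[OF c1(1), of _ "\<lambda>u. \<mu> * u"] continuous_on_compose2[OF c1(2), of _ "\<lambda>u. \<mu> * u"] continuous_on_mult_left continuous_on_id)
  have "\<mu> ^ k * h2 (\<mu> * 0) * h1 0 = \<mu> ^ m * h1 (\<mu> * 0) * h2 0"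
    by (rule lim0_eq[OF \<open>0 < r\<close>, where p="\<lambda>u. \<mu> ^ k * h2 (\<mu> * u) * h1 u" and q="\<lambda>u. \<mu> ^ m * h1 (\<mu> * u) * h2 u"])
      (use c1 c2 eq in \<open>auto intro!: continuous_on_mult continuous_on_const\<close>)
  then have pk: "\<mu> ^ k = \<mu> ^ m" using assms(6,7) by simp
  have mu0: "\<mu> \<noteq> 0" using mu(1) by auto
  show ?thesis
  proof (rule ccontr)
    assume "m \<noteq> k"
    then consider "m < k" | "k < m" by linarith
    then show False
    proof cases
      case 1
      then have "\<mu> ^ k = \<mu> ^ m * \<mu> ^ (k - m)" by (simp flip: power_add)
      then have "\<mu> ^ (k - m) = 1" using pk mu0 by simp
      then show False using mu(2)[of "k - m"] 1 by simp
    next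
      case 2
      then have "\<mu> ^ m = \<mu> ^ k * \<mu> ^ (m - k)" by (simp flip: power_add)
      then have "\<mu> ^ (m - k) = 1" using pk mu0 by simp
      then show False using mu(2)[of "m - k"] 2 by simp
    qed
  qed
qed

lemma ratio_const:
  fixes f g :: "complex \<Rightarrow> complex" and \<mu> :: complex
  assumes hf: "f holomorphic_on ball 0 1" and hg: "g holomorphic_on ball 0 1"
    and w: "w \<in> ball 0 1" "f w \<noteq> 0"
    and mu: "cmod \<mu> = 1" "\<And>n. n > 0 \<Longrightarrow> \<mu> ^ n \<noteq> 1"
    and id: "\<And>u. u \<in> ball 0 1 \<Longrightarrow> g (\<mu> * u) * f u = f (\<mu> * u) * g u"
  shows "\<exists>c. \<forall>u\<in>ball 0 1. g u = c * f u"
proof (cases "\<forall>u\<in>ball 0 1. g u = 0")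
  case True then show ?thesis by (intro exI[of _ 0]) auto
next
  case False
  then obtain w2 where w2: "w2 \<in> ball 0 1" "g w2 \<noteq> 0" by blast
  obtain h1 r1 m where F1: "0 < r1" "ball 0 r1 \<subseteq> ball (0::complex) 1" "h1 holomorphic_on ball 0 r1"
     "\<And>u. u \<in> ball 0 r1 \<Longrightarrow> f u = u ^ m * h1 u" "h1 0 \<noteq> 0"
    using factor0[OF hf w] by blast
  obtain h2 r2 k where F2: "0 < r2" "ball 0 r2 \<subseteq> ball (0::complex) 1" "h2 holomorphic_on ball 0 r2"
     "\<And>u. u \<in> ball 0 r2 \<Longrightarrow> g u = u ^ k * h2 u" "h2 0 \<noteq> 0"
    using factor0[OF hg w2] by blast
  define r where "r = min r1 r2"
  have r: "0 < r" "ball 0 r \<subseteq> ball (0::complex) r1" "ball 0 r \<subseteq> ball (0::complex) r2"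
    using F1(1) F2(1) by (auto simp: r_def)
  have rb: "ball 0 r \<subseteq> ball (0::complex) 1" using r(2) F1(2) by blast
  have "m = k"
    by (rule exps_eq[of r h1 h2 f m g k \<mu>])
       (use r rb F1 F2 mu id holomorphic_on_subset in \<open>blast+\<close>)
  define c where "c = h2 0 / h1 0"
  define d where "d = (\<lambda>u. g u - c * f u)"
  have hd: "d holomorphic_on ball 0 1"
    unfolding d_def by (intro holomorphic_intros hf hg)
  have idd: "d (\<mu> * u) * f u = f (\<mu> * u) * d u" if "u \<in> ball 0 1" for u
  proof -
    have "d (\<mu> * u) * f u = g (\<mu> * u) * f u - c * f (\<mu> * u) * f u"
      unfolding d_def by (simp add: algebra_simps)
    also have "\<dots> = f (\<mu> * u) * g u - c * f (\<mu> * u) * f u" using id[OF that] by simp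
    also have "\<dots> = f (\<mu> * u) * d u" unfolding d_def by (simp add: algebra_simps)
    finally show ?thesis .
  qed
  show ?thesis
  proof (cases "\<forall>u\<in>ball 0 1. d u = 0")
    case True then show ?thesis by (intro exI[of _ c]) (auto simp: d_def)
  next
    case False
    then obtain w3 where w3: "w3 \<in> ball 0 1" "d w3 \<noteq> 0" by blast
    obtain h3 r3 p where F3: "0 < r3" "ball 0 r3 \<subseteq> ball (0::complex) 1" "h3 holomorphic_on ball 0 r3"
       "\<And>u. u \<in> ball 0 r3 \<Longrightarrow> d u = u ^ p * h3 u" "h3 0 \<noteq> 0"
      using factor0[OF hd w3] by blast
    define r' where "r' = min r r3"
    have r': "0 < r'" "ball 0 r' \<subseteq> ball (0::complex) r" "ball 0 r' \<subseteq> ball (0::complex) r3"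
      using r(1) F3(1) by (auto simp: r'_def)
    have rb': "ball 0 r' \<subseteq> ball (0::complex) 1" using r'(2) rb by blast
    have s1: "ball 0 r' \<subseteq> ball (0::complex) r1" "ball 0 r' \<subseteq> ball (0::complex) r2"
      using r'(2) r(2,3) by blast+
    have "m = p"
      by (rule exps_eq[of r' h1 h3 f m d p \<mu>])
         (use r' rb' s1 F1 F3 mu idd holomorphic_on_subset in \<open>blast+\<close>)
    have c1: "continuous_on (ball 0 r') h1" "continuous_on (ball 0 r') h2" "continuous_on (ball 0 r') h3"
      using holomorphic_on_imp_continuous_on holomorphic_on_subset F1(3) F2(3) F3(3) s1 r'(3) by blast+
    have "h3 0 = h2 0 - c * h1 0"
    proof (rule lim0_eq[OF r'(1)])
      show "continuous_on (ball 0 r') h3" by (rule c1(3))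
      show "continuous_on (ball 0 r') (\<lambda>u. h2 u - c * h1 u)"
        by (intro continuous_intros c1)
      fix u :: complex assume u: "u \<in> ball 0 r'" "u \<noteq> 0"
      have "u ^ m * h3 u = d u" using F3(4)[of u] u r'(3) \<open>m = p\<close> by auto
      also have "\<dots> = u ^ m * (h2 u - c * h1 u)"
      proof -
        have "u \<in> ball 0 r1" "u \<in> ball 0 r2" using u s1 by blast+
        then have "f u = u ^ m * h1 u" "g u = u ^ m * h2 u" using F1(4) F2(4) \<open>m = k\<close> by auto
        then show ?thesis unfolding d_def by (simp add: algebra_simps)
      qed
      finally show "h3 u = h2 u - c * h1 u" using u(2) by simp
    qed
    also have "\<dots> = 0" using F1(5) by (simp add: c_def)
    finally show ?thesis using F3(5) by simp
  qed
qed

lemma mu_not_root: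
  fixes \<theta> :: real
  assumes "\<theta> / pi \<notin> \<rat>" "n > 0"
  shows "cis (- 2 * \<theta>) ^ n \<noteq> 1"
proof
  assume "cis (- 2 * \<theta>) ^ n = 1"
  moreover have "cis (real n * (- 2 * \<theta>)) = cis (- 2 * \<theta>) ^ n"
    by (rule Complex.DeMoivre[symmetric])
  ultimately have "cis (real n * (- 2 * \<theta>)) = 1"
    by simp
  then have "exp (\<i> * complex_of_real (real n * (- 2 * \<theta>))) = 1"
    by (simp only: cis_conv_exp)
  then obtain k :: int where k: "real n * (- 2 * \<theta>) = of_int (2 * k) * pi"
    unfolding exp_eq_1 by auto
  have "\<theta> / pi = - of_int k / of_nat n"
    using k assms(2) pi_gt_zero by (simp add: field_simps)
  also have "\<dots> \<in> \<rat>" by (intro Rats_divide Rats_minus_iff[THEN iffD2] Rats_of_int Rats_of_nat)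
  finally show False using assms(1) by simp
qed

theorem theorem4p5:
  fixes f g :: "complex \<Rightarrow> complex" and a \<theta> :: real
  assumes "f \<in> H2_strip" and "g \<in> H2_strip"
    and "\<And>x::real. cmod (g (of_real x)) = cmod (f (of_real x))"
    and "\<And>t::real. t \<in> {-1<..<1} \<Longrightarrow>
           cmod (g (of_real a + of_real t * cis \<theta>)) = cmod (f (of_real a + of_real t * cis \<theta>))"
    and "\<theta> / pi \<notin> \<rat>"
  shows "\<exists>c::complex. cmod c = 1 \<and> (\<forall>z\<in>strip. g z = c * f z)"
proof -
  have hf: "f holomorphic_on strip" and hg: "g holomorphic_on strip"
    using assms(1,2) unfolding H2_strip_def by auto
  have Sopen: "open strip"
    unfolding strip_def by (intro open_Collect_less continuous_intros)
  have "strip = {z. Im z < 1} \<inter> {z. Im z > -1}"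
    unfolding strip_def by auto
  then have "convex strip" using convex_halfspace_Im_lt convex_halfspace_Im_gt convex_Int by metis
  then have Sconn: "connected strip" by (rule convex_connected)
  have Scnj: "cnj z \<in> strip \<longleftrightarrow> z \<in> strip" for z by (simp add: strip_def)
  have cnjS: "cnj ` strip = strip"
    using Scnj by (auto simp: image_iff) (metis complex_cnj_cnj)
  have realS: "complex_of_real x \<in> strip" for x by (simp add: strip_def)
  have Rsub: "range complex_of_real \<subseteq> strip" using realS by auto
  have Rlim: "0 islimpt (range complex_of_real)"
    unfolding islimpt_approachable
  proof (intro allI impI)
    fix e :: real assume "0 < e"
    have "complex_of_real (e/2) \<in> range complex_of_real" by (rule rangeI)
    then show "\<exists>x'\<in>range complex_of_real. x' \<noteq> 0 \<and> dist x' 0 < e"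
      by (rule bexI[rotated]) (use \<open>0 < e\<close> in auto)
  qed
  have zeroS: "0 \<in> strip" using realS[of 0] by simp
  define F where "F = (\<lambda>z. cnj (f (cnj z)))"
  define G where "G = (\<lambda>z. cnj (g (cnj z)))"
  have hF: "F holomorphic_on strip"
    using holomorphic_on_compose_cnj_cnj[of f strip] hf Sopen cnjS unfolding F_def comp_def by simp
  have hG: "G holomorphic_on strip"
    using holomorphic_on_compose_cnj_cnj[of g strip] hg Sopen cnjS unfolding G_def comp_def by simp
  have normsq: "z * cnj z = complex_of_real ((cmod z)\<^sup>2)" for z :: complex
    by (rule complex_norm_square[symmetric])
  have E1: "g z * G z = f z * F z" if "z \<in> strip" for z
  proof -
    have "(\<lambda>z. g z * G z - f z * F z) z = 0"
    proof (rule analytic_continuation[of "\<lambda>z. g z * G z - f z * F z", OF _ Sopen Sconn Rsub zeroS Rlim])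
      show "(\<lambda>z. g z * G z - f z * F z) holomorphic_on strip"
        by (intro holomorphic_intros hf hg hF hG)
      show "z \<in> strip" by (rule that)
      fix w assume "w \<in> range complex_of_real"
      then obtain x where w: "w = complex_of_real x" by auto
      show "g w * G w - f w * F w = 0"
        unfolding w G_def F_def by (simp add: normsq assms(3))
    qed
    then show ?thesis by simp
  qed
  define \<mu> where "\<mu> = cis (- 2 * \<theta>)"
  have mu1: "cmod \<mu> = 1" unfolding \<mu>_def by simp
  have mun: "\<mu> ^ n \<noteq> 1" if "n > 0" for n
    unfolding \<mu>_def using mu_not_root[OF assms(5) that] .
  have mucnj: "\<mu> * cnj \<mu> = 1" unfolding \<mu>_def by (simp add: cis_cnj cis_mult)
  define A where "A = complex_of_real a"
  define \<sigma> where "\<sigma> = (\<lambda>z. A + \<mu> * (z - A))"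
  define B where "B = ball A 1"
  have BS: "B \<subseteq> strip"
  proof
    fix z assume "z \<in> B"
    then have "cmod (z - A) < 1" by (simp add: B_def dist_norm norm_minus_commute)
    moreover have "\<bar>Im z\<bar> = \<bar>Im (z - A)\<bar>" by (simp add: A_def)
    moreover have "\<bar>Im (z - A)\<bar> \<le> cmod (z - A)" by (rule abs_Im_le_cmod)
    ultimately show "z \<in> strip" by (simp add: strip_def)
  qed
  have AB: "A \<in> B" by (simp add: B_def)
  have sB: "\<sigma> z \<in> B" if "z \<in> B" for z
    using that mu1 by (simp add: B_def \<sigma>_def dist_norm norm_mult norm_minus_commute)
  have hsig: "\<sigma> holomorphic_on B" unfolding \<sigma>_def by (intro holomorphic_intros)
  have hGs: "(\<lambda>z. G (\<sigma> z)) holomorphic_on B"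
    using holomorphic_on_compose_gen[OF hsig hG] sB BS by (auto simp: comp_def)
  have hFs: "(\<lambda>z. F (\<sigma> z)) holomorphic_on B"
    using holomorphic_on_compose_gen[OF hsig hF] sB BS by (auto simp: comp_def)
  have hgs: "(\<lambda>z. g (\<sigma> z)) holomorphic_on B"
    using holomorphic_on_compose_gen[OF hsig hg] sB BS by (auto simp: comp_def)
  have hfs: "(\<lambda>z. f (\<sigma> z)) holomorphic_on B"
    using holomorphic_on_compose_gen[OF hsig hf] sB BS by (auto simp: comp_def)
  have hfB: "f holomorphic_on B" and hgB: "g holomorphic_on B"
    using hf hg BS holomorphic_on_subset by blast+
  define U where "U = {A + complex_of_real t * cis \<theta> | t. t \<in> {-1<..<1}}"
  have UB: "U \<subseteq> B"
    by (auto simp: U_def B_def dist_norm norm_mult)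
  have Ulim: "A islimpt U"
    unfolding islimpt_approachable
  proof (intro allI impI)
    fix e :: real assume e: "0 < e"
    define t where "t = min (e/2) (1/2)"
    have t: "0 < t" "t < e" "t \<in> {-1<..<1}" using e by (auto simp: t_def)
    show "\<exists>x'\<in>U. x' \<noteq> A \<and> dist x' A < e"
      by (intro bexI[of _ "A + complex_of_real t * cis \<theta>"]) (use t in \<open>auto simp: U_def dist_norm norm_mult\<close>)
  qed
  have E2: "g z * G (\<sigma> z) = f z * F (\<sigma> z)" if "z \<in> B" for z
  proof -
    have "(\<lambda>z. g z * G (\<sigma> z) - f z * F (\<sigma> z)) z = 0"
    proof (rule analytic_continuation[of "\<lambda>z. g z * G (\<sigma> z) - f z * F (\<sigma> z)", OF _ open_ball connected_ball UB[unfolded B_def] AB[unfolded B_def] Ulim])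
      show "(\<lambda>z. g z * G (\<sigma> z) - f z * F (\<sigma> z)) holomorphic_on ball A 1"
        unfolding B_def[symmetric] by (intro holomorphic_intros hfB hgB hFs hGs)
      show "z \<in> ball A 1" using that by (simp add: B_def)
      fix w assume "w \<in> U"
      then obtain t where t: "t \<in> {-1<..<1}" "w = A + complex_of_real t * cis \<theta>"
        unfolding U_def by blast
      have "cnj (\<sigma> w) = w"
        unfolding t(2) \<sigma>_def \<mu>_def A_def by (simp add: cis_cnj cis_mult)
      then have "G (\<sigma> w) = cnj (g w)" "F (\<sigma> w) = cnj (f w)"
        unfolding G_def F_def by simp_all
      moreover have "cmod (g w) = cmod (f w)" using assms(4)[OF t(1)] t(2) A_def by simp
      ultimately show "g w * G (\<sigma> w) - f w * F (\<sigma> w) = 0"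
        by (simp add: normsq)
    qed
    then show ?thesis by simp
  qed
  have E3: "F (\<sigma> z) * (g (\<sigma> z) * f z - f (\<sigma> z) * g z) = 0" if "z \<in> B" for z
  proof -
    have e1: "g (\<sigma> z) * G (\<sigma> z) = f (\<sigma> z) * F (\<sigma> z)" using E1 sB[OF that] BS by blast
    have e2: "g z * G (\<sigma> z) = f z * F (\<sigma> z)" using E2[OF that] .
    have "F (\<sigma> z) * (g (\<sigma> z) * f z - f (\<sigma> z) * g z)
        = g (\<sigma> z) * (f z * F (\<sigma> z)) - g z * (f (\<sigma> z) * F (\<sigma> z))"
      by (simp add: algebra_simps)
    also have "\<dots> = g (\<sigma> z) * (g z * G (\<sigma> z)) - g z * (g (\<sigma> z) * G (\<sigma> z))"
      by (simp only: e1 e2)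
    also have "\<dots> = 0" by (simp add: algebra_simps)
    finally show ?thesis .
  qed
  have fcnj: "f z = cnj (F (cnj z))" for z unfolding F_def by simp
  have f_zero_real: "f z = 0" if "\<And>x. f (complex_of_real x) = 0" "z \<in> strip" for z
    by (rule analytic_continuation[OF hf Sopen Sconn Rsub zeroS Rlim]) (use that in auto)
  show ?thesis
  proof (cases "\<forall>z\<in>B. F (\<sigma> z) = 0")
    case True
    have FB: "F w = 0" if "w \<in> B" for w
    proof -
      define z where "z = A + cnj \<mu> * (w - A)"
      have "\<sigma> z = w" unfolding z_def \<sigma>_def by (simp add: mult.assoc[symmetric] mucnj)
      moreover have "z \<in> B" using that mu1 by (simp add: z_def B_def dist_norm norm_mult norm_minus_commute)
      ultimately show ?thesis using True by metis
    qed
    have F0: "F w = 0" if "w \<in> strip" for w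
      using analytic_continuation_open[of B strip F "\<lambda>_. 0", OF _ Sopen _ Sconn BS hF _ FB that]
      AB by (auto simp: B_def)
    have f0: "f z = 0" if "z \<in> strip" for z
      using F0[of "cnj z"] Scnj that fcnj by simp
    have g0: "g z = 0" if "z \<in> strip" for z
      by (rule analytic_continuation[OF hg Sopen Sconn Rsub zeroS Rlim])
         (use that assms(3) f0 realS in auto)
    show ?thesis by (intro exI[of _ 1]) (simp add: f0 g0)
  next
    case False
    then obtain z0 where z0: "z0 \<in> B" "F (\<sigma> z0) \<noteq> 0" by blast
    have fnz: "\<exists>x. f (complex_of_real x) \<noteq> 0"
    proof (rule ccontr)
      assume "\<nexists>x. f (complex_of_real x) \<noteq> 0"
      then have "f z = 0" if "z \<in> strip" for z using f_zero_real that by blast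
      moreover have "cnj (\<sigma> z0) \<in> strip" using Scnj sB[OF z0(1)] BS by blast
      ultimately show False using z0(2) unfolding F_def by simp
    qed
    define H where "H = (\<lambda>z. g (\<sigma> z) * f z - f (\<sigma> z) * g z)"
    have hH: "H holomorphic_on B" unfolding H_def by (intro holomorphic_intros hfB hgB hfs hgs)
    have "continuous (at z0) (\<lambda>z. F (\<sigma> z))"
      using hFs z0(1) unfolding B_def
      by (meson holomorphic_on_imp_continuous_on continuous_on_eq_continuous_at open_ball)
    then obtain e where e: "e > 0" "\<And>y. dist z0 y < e \<Longrightarrow> F (\<sigma> y) \<noteq> 0"
      using continuous_at_avoid z0(2) by blast
    have H0: "H z = 0" if "z \<in> B" for z
    proof -
      have "H z = (\<lambda>_. 0) z"
      proof (rule analytic_continuation_open[of "ball z0 e \<inter> B" B H "\<lambda>_. 0"])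
        show "open (ball z0 e \<inter> B)" unfolding B_def by auto
        have "z0 \<in> ball z0 e \<inter> B" using z0(1) e(1) by simp
        then show "ball z0 e \<inter> B \<noteq> {}" by blast
        show "open B" "connected B" unfolding B_def by auto
        show "ball z0 e \<inter> B \<subseteq> B" by blast
        show "H holomorphic_on B" by (rule hH)
        show "(\<lambda>_. 0) holomorphic_on B" by (rule holomorphic_on_const)
        show "z \<in> B" by (rule that)
        fix w assume "w \<in> ball z0 e \<inter> B"
        then have "F (\<sigma> w) \<noteq> 0" "w \<in> B" using e(2) by auto
        then show "H w = 0" using E3 unfolding H_def by auto
      qed
      then show ?thesis by simp
    qed
    define f0 where "f0 = (\<lambda>u. f (A + u))"
    define g0 where "g0 = (\<lambda>u. g (A + u))"
    have shB: "A + u \<in> B" if "u \<in> ball 0 1" for u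
      using that by (simp add: B_def dist_norm)
    have hshift: "(\<lambda>u. A + u) holomorphic_on ball 0 1" by (intro holomorphic_intros)
    have hf0: "f0 holomorphic_on ball 0 1"
      using holomorphic_on_compose_gen[OF hshift hfB] shB unfolding f0_def comp_def by blast
    have hg0: "g0 holomorphic_on ball 0 1"
      using holomorphic_on_compose_gen[OF hshift hgB] shB unfolding g0_def comp_def by blast
    obtain x where x: "f (complex_of_real x) \<noteq> 0" using fnz by blast
    have fnzB: "\<exists>w\<in>ball 0 1. f0 w \<noteq> 0"
    proof (rule ccontr)
      assume "\<not> (\<exists>w\<in>ball 0 1. f0 w \<noteq> 0)"
      then have fz: "\<And>u. u \<in> ball 0 1 \<Longrightarrow> f0 u = 0" by blast
      have fB: "f w = 0" if "w \<in> B" for w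
      proof -
        have "w - A \<in> ball 0 1" using that by (simp add: B_def dist_norm norm_minus_commute)
        then have "f0 (w - A) = 0" by (rule fz)
        then show ?thesis by (simp add: f0_def)
      qed
      have "f (complex_of_real x) = (\<lambda>_. 0) (complex_of_real x)"
        using analytic_continuation_open[of B strip f "\<lambda>_. 0", OF _ Sopen _ Sconn BS hf _ fB realS]
        AB by (auto simp: B_def)
      then show False using x by simp
    qed
    then obtain w where w: "w \<in> ball 0 1" "f0 w \<noteq> 0" by blast
    have id0: "g0 (\<mu> * u) * f0 u = f0 (\<mu> * u) * g0 u" if "u \<in> ball 0 1" for u
    proof -
      have "\<sigma> (A + u) = A + \<mu> * u" unfolding \<sigma>_def by simp
      then show ?thesis using H0[OF shB[OF that]] unfolding H_def f0_def g0_def by simp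
    qed
    obtain c where c: "\<And>u. u \<in> ball 0 1 \<Longrightarrow> g0 u = c * f0 u"
      using ratio_const[OF hf0 hg0 w mu1 mun id0] by blast
    have cB: "g z = c * f z" if "z \<in> B" for z
    proof -
      have "z - A \<in> ball 0 1" using that by (simp add: B_def dist_norm norm_minus_commute)
      then show ?thesis using c[of "z - A"] unfolding f0_def g0_def by simp
    qed
    have cS: "g z = c * f z" if "z \<in> strip" for z
      using analytic_continuation_open[of B strip g "\<lambda>z. c * f z", OF _ Sopen _ Sconn BS hg _ cB that]
        AB holomorphic_on_mult[OF holomorphic_on_const hf] by (auto simp: B_def)
    have "cmod c * cmod (f (complex_of_real x)) = cmod (f (complex_of_real x))"
      using cS[OF realS[of x]] assms(3)[of x] by (simp add: norm_mult)
    then have "cmod c = 1" using x by simp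
    then show ?thesis using cS by blast
  qed
qed

end
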